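(* Let $\mathcal{A}=\{\alpha_1<\dots<\alpha_m\}\subset(0,1)$ and $d_{\mathcal{A}}=\min_{\alpha\in\mathcal{A}}\min(\alpha,1-\alpha)$. Suppose $|y_t-b_t^{\alpha}|\le R$ for all $\alpha\in\mathcal{A}$ and all $t$, for some $R>0$. Then for each $t$ the MultiQT loss $\ell_t(\theta)=\sum_{\alpha\in\mathcal{A}}\rho_\alpha(b_t^{\alpha}+\theta^{\alpha},y_t)$ is $(h,\phi(h))$-restorative for any $h\ge\frac{R|\mathcal{A}|^{3/2}}{d_{\mathcal{A}}}$, where $\phi(h)=\frac{h\,d_{\mathcal{A}}}{\sqrt{|\mathcal{A}|}}-R|\mathcal{A}|$ (a constant function).
   Context: Quantile loss $\rho_\alpha(\hat y,y)=\alpha|y-\hat y|$ if $y-\hat y\ge0$ and $(1-\alpha)|y-\hat y|$ otherwise. $b_t\in\mathbb{R}^m$ are base forecasts, $y_t\in\mathbb{R}$ outcomes. A loss $\ell$ is $(h,\phi)$-restorative ($h\ge0$, $\phi\ge0$) if all its subgradients $g$ satisfy $\langle\theta,g(\theta)\rangle\ge\phi(\theta)$ whenever $\|\theta\|_2>h$. *)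

theory Defs
  imports "HOL-Analysis.Analysis"
begin

definition quantile_loss :: "real \<Rightarrow> real \<Rightarrow> real \<Rightarrow> real" where
  "quantile_loss a yhat y =
     (if y - yhat \<ge> 0 then a * \<bar>y - yhat\<bar> else (1 - a) * \<bar>y - yhat\<bar>)"

definition is_subgradient :: "('n::real_inner \<Rightarrow> real) \<Rightarrow> 'n \<Rightarrow> 'n \<Rightarrow> bool" where
  "is_subgradient l theta g \<longleftrightarrow> (\<forall>z. l z \<ge> l theta + inner g (z - theta))"

definition restorative :: "real \<Rightarrow> ('n::real_inner \<Rightarrow> real) \<Rightarrow> ('n \<Rightarrow> real) \<Rightarrow> bool" where
  "restorative h phi l \<longleftrightarrow> h \<ge> 0 \<and> (\<forall>theta. phi theta \<ge> 0) \<and>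
     (\<forall>theta g. norm theta > h \<longrightarrow> is_subgradient l theta g \<longrightarrow> inner theta g \<ge> phi theta)"

end

theory Submission
  imports Defs
begin

lemma coord:
  fixes a c x g d R yy :: real
  assumes a: "0 < a" "a < 1" and r: "\<bar>yy - c\<bar> \<le> R"
    and d: "d \<le> min a (1 - a)"
    and sg: "\<And>s. quantile_loss a (c + (x + s)) yy \<ge> quantile_loss a (c + x) yy + g * s"
  shows "x * g \<ge> d * \<bar>x\<bar> - R"
proof -
  have up: "g \<le> 1 - a"
    using sg[of 1] a unfolding quantile_loss_def by (auto split: if_splits simp: abs_if algebra_simps)
  have lo: "g \<ge> - a"
    using sg[of "-1"] a unfolding quantile_loss_def by (auto split: if_splits simp: abs_if algebra_simps)
  have atr: "quantile_loss a (c + x) yy + g * (yy - c - x) \<le> 0"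
    using sg[of "yy - c - x"] unfolding quantile_loss_def by simp
  have R0: "R \<ge> 0" using r by linarith
  show ?thesis
  proof (cases "\<bar>x\<bar> \<le> R")
    case True
    have "x * g \<ge> - \<bar>x\<bar> * max a (1 - a)"
    proof -
      have "\<bar>g\<bar> \<le> max a (1 - a)" using up lo by auto
      then have "\<bar>x\<bar> * \<bar>g\<bar> \<le> \<bar>x\<bar> * max a (1 - a)" by (simp add: mult_left_mono)
      moreover have "x * g \<ge> - (\<bar>x\<bar> * \<bar>g\<bar>)" by (metis abs_ge_minus_self abs_mult minus_le_iff)
      ultimately show ?thesis by linarith
    qed
    moreover have "- \<bar>x\<bar> * max a (1 - a) \<ge> d * \<bar>x\<bar> - \<bar>x\<bar>"
    proof -
      have "max a (1 - a) \<le> 1 - d" using d by (auto simp: max_def min_def)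
      then have "\<bar>x\<bar> * max a (1 - a) \<le> \<bar>x\<bar> * (1 - d)" by (simp add: mult_left_mono)
      then show ?thesis by (simp add: algebra_simps)
    qed
    ultimately show ?thesis using True by linarith
  next
    case False
    show ?thesis
    proof (cases "x > 0")
      case True
      then have xr: "x > yy - c" using False r by auto
      then have "quantile_loss a (c + x) yy = (1 - a) * (x - (yy - c))"
        unfolding quantile_loss_def by auto
      with atr have "(1 - a) * (x - (yy - c)) \<le> g * (x - (yy - c))" by (simp add: algebra_simps)
      with xr have "g \<ge> 1 - a" by (simp add: mult_le_cancel_right)
      then have "x * g \<ge> x * (1 - a)" using True by (simp add: mult_left_mono)
      moreover have "x * (1 - a) \<ge> d * x" using d True by (simp add: mult_right_mono mult.commute)
      moreover have "\<bar>x\<bar> = x" using True by simp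
      ultimately show ?thesis using R0 by linarith
    next
      case nx: False
      then have xr: "x < yy - c" using False r by auto
      then have "quantile_loss a (c + x) yy = a * ((yy - c) - x)"
        unfolding quantile_loss_def by auto
      with atr have "(a + g) * ((yy - c) - x) \<le> 0 * ((yy - c) - x)" by (simp add: algebra_simps)
      with xr have "a + g \<le> 0" by (simp add: mult_le_0_iff)
      then have "g \<le> - a" by simp
      then have "x * g \<ge> x * (- a)" using nx mult_left_mono_neg[of g "-a" x] by linarith
      moreover have "x * (- a) \<ge> d * (- x)" using mult_right_mono[of d a "- x"] d nx by (simp add: mult.commute)
      moreover have "d * \<bar>x\<bar> = d * (- x)" using nx by simp
      ultimately show ?thesis using R0 by linarith
    qed
  qed
qed

lemma coord_sub:
  fixes F :: "'m::finite \<Rightarrow> real \<Rightarrow> real" and theta g :: "real^'m"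
  assumes "is_subgradient (\<lambda>z::real^'m. \<Sum>j\<in>UNIV. F j (z $ j)) theta g"
  shows "F i (theta $ i + s) \<ge> F i (theta $ i) + g $ i * s"
proof -
  let ?z = "theta + axis i s"
  have 1: "(\<Sum>j\<in>UNIV. F j (?z $ j)) \<ge> (\<Sum>j\<in>UNIV. F j (theta $ j)) + inner g (?z - theta)"
    using assms unfolding is_subgradient_def by blast
  have 2: "inner g (?z - theta) = g $ i * s" by (simp add: inner_axis)
  have 3: "(\<Sum>j\<in>UNIV. F j (?z $ j)) = F i (theta $ i + s) + (\<Sum>j\<in>UNIV-{i}. F j (theta $ j))"
  proof -
    have "(\<Sum>j\<in>UNIV. F j (?z $ j)) = F i (?z $ i) + (\<Sum>j\<in>UNIV-{i}. F j (?z $ j))"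
      by (rule sum.remove) auto
    also have "(\<Sum>j\<in>UNIV-{i}. F j (?z $ j)) = (\<Sum>j\<in>UNIV-{i}. F j (theta $ j))"
      by (rule sum.cong) (auto simp: axis_def)
    finally show ?thesis by simp
  qed
  have 4: "(\<Sum>j\<in>UNIV. F j (theta $ j)) = F i (theta $ i) + (\<Sum>j\<in>UNIV-{i}. F j (theta $ j))"
    by (rule sum.remove) auto
  show ?thesis using 1 2 3 4 by linarith
qed

theorem lemma1:
  fixes \<alpha> :: "'m::finite \<Rightarrow> real"
    and b :: "nat \<Rightarrow> real^'m"
    and y :: "nat \<Rightarrow> real"
    and R h :: real
  assumes "inj \<alpha>"
    and "\<forall>i. 0 < \<alpha> i \<and> \<alpha> i < 1"
    and "R > 0"
    and "\<forall>t i. \<bar>y t - b t $ i\<bar> \<le> R"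
    and "h \<ge> R * real CARD('m) powr (3/2) / Min (range (\<lambda>i. min (\<alpha> i) (1 - \<alpha> i)))"
  shows "\<forall>t. restorative h
           (\<lambda>_. h * Min (range (\<lambda>i. min (\<alpha> i) (1 - \<alpha> i))) / sqrt (real CARD('m))
                 - R * real CARD('m))
           (\<lambda>\<theta>::real^'m. \<Sum>i\<in>UNIV. quantile_loss (\<alpha> i) (b t $ i + \<theta> $ i) (y t))"
proof
  fix t
  define d where "d = Min (range (\<lambda>i. min (\<alpha> i) (1 - \<alpha> i)))"
  define n where "n = real CARD('m)"
  have n1: "n \<ge> 1" unfolding n_def by simp
  have dle: "\<And>i. d \<le> min (\<alpha> i) (1 - \<alpha> i)" unfolding d_def by (rule Min_le) auto
  have d0: "d > 0" unfolding d_def using assms(2) by (subst Min_gr_iff) auto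
  have pw: "n powr (3/2) = n * sqrt n"
  proof -
    have "n powr (3/2) = n powr (1 + 1/2)" by simp
    also have "\<dots> = n powr 1 * n powr (1/2)" by (simp only: powr_add)
    also have "\<dots> = n * sqrt n" using n1 by (simp add: powr_half_sqrt)
    finally show ?thesis .
  qed
  have hge: "h \<ge> R * (n * sqrt n) / d" using assms(5) pw unfolding d_def n_def by simp
  have sq1: "sqrt n \<ge> 1" using n1 by simp
  have hd: "h * d \<ge> R * (n * sqrt n)" using hge d0 by (simp add: divide_le_eq)
  have Rn: "R * n \<ge> 0" using assms(3) n1 by simp
  have h0: "h \<ge> 0"
  proof -
    have "R * (n * sqrt n) \<ge> 0" using assms(3) n1 by simp
    then show ?thesis using hd d0 by (smt (verit) mult_nonneg_nonpos2 mult_less_0_iff)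
  qed
  have phi0: "h * d / sqrt n - R * n \<ge> 0"
  proof -
    have "h * d / sqrt n \<ge> R * (n * sqrt n) / sqrt n" using hd sq1 by (intro divide_right_mono) auto
    also have "R * (n * sqrt n) / sqrt n = R * n" using sq1 by simp
    finally show ?thesis by simp
  qed
  show "restorative h (\<lambda>_. h * Min (range (\<lambda>i. min (\<alpha> i) (1 - \<alpha> i))) / sqrt (real CARD('m))
                 - R * real CARD('m))
           (\<lambda>\<theta>::real^'m. \<Sum>i\<in>UNIV. quantile_loss (\<alpha> i) (b t $ i + \<theta> $ i) (y t))"
    unfolding restorative_def d_def[symmetric] n_def[symmetric]
  proof (intro conjI allI impI)
    show "0 \<le> h" by (rule h0)
    fix th :: "real^'m"
    show "0 \<le> h * d / sqrt n - R * n" by (rule phi0)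
    fix g :: "real^'m"
    assume nh: "h < norm th"
    assume sg: "is_subgradient (\<lambda>\<theta>::real^'m. \<Sum>i\<in>UNIV. quantile_loss (\<alpha> i) (b t $ i + \<theta> $ i) (y t)) th g"
    have ci: "th $ i * g $ i \<ge> d * \<bar>th $ i\<bar> - R" for i
    proof (rule coord[where a = "\<alpha> i" and c = "b t $ i" and yy = "y t"])
      show "0 < \<alpha> i" "\<alpha> i < 1" using assms(2) by auto
      show "\<bar>y t - b t $ i\<bar> \<le> R" using assms(4) by auto
      show "d \<le> min (\<alpha> i) (1 - \<alpha> i)" by (rule dle)
      fix s
      show "quantile_loss (\<alpha> i) (b t $ i + th $ i) (y t) + g $ i * s
            \<le> quantile_loss (\<alpha> i) (b t $ i + (th $ i + s)) (y t)"
        using coord_sub[where F = "\<lambda>j u. quantile_loss (\<alpha> j) (b t $ j + u) (y t)", OF sg] by simp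
    qed
    have "inner th g = (\<Sum>i\<in>UNIV. th $ i * g $ i)" by (simp add: inner_vec_def)
    also have "\<dots> \<ge> (\<Sum>i\<in>UNIV. d * \<bar>th $ i\<bar> - R)" by (rule sum_mono) (rule ci)
    finally have "inner th g \<ge> d * (\<Sum>i\<in>UNIV. \<bar>th $ i\<bar>) - R * n"
      by (simp add: sum_subtractf sum_distrib_left n_def mult.commute)
    moreover have "d * (\<Sum>i\<in>UNIV. \<bar>th $ i\<bar>) \<ge> d * norm th"
      using d0 norm_le_l1_cart by (simp add: mult_left_mono)
    moreover have "d * norm th \<ge> d * h" using d0 nh by simp
    moreover have "h * d / sqrt n \<le> h * d"
    proof -
      have hd0: "h * d \<ge> 0" using h0 d0 by simp
      have "h * d * 1 \<le> h * d * sqrt n" by (rule mult_left_mono[OF sq1 hd0])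
      moreover have "sqrt n > 0" using sq1 by linarith
      ultimately show ?thesis by (simp add: divide_le_eq)
    qed
    ultimately show "h * d / sqrt n - R * n \<le> inner th g" by (simp add: mult.commute)
  qed
qed

end
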